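(* Let $\widetilde T$ be a filling of the Young diagram of a partition $\lambda$ of $n$ using each element of $[\overline n]$ exactly once. Suppose that for some column indices $c_1,c_2$ and integers $i$, $k,l\ge0$, column $c_1$ of $\widetilde T$ is filled from top to bottom with $\overline{i+1},\overline{i+2},\dots,\overline{i+k+l}$ and column $c_2$ is filled from top to bottom with $\overline{i+k+l+1},\dots,\overline{i+k+2l}$. Define tableaux $\widetilde T_0=\widetilde T,\widetilde T_1,\dots,\widetilde T_{(k+l)l}$, where for $1\le j\le (k+l)l$, with $m=\lceil j/(k+l)\rceil$, $\widetilde T_j$ is obtained from $\widetilde T_{j-1}$ by exchanging the entries in positions $((k+l)m-j+1,\,c_1)$ and $(m,\,c_2)$ (positions given as (row, column)). Let $T_j$ be the tabloid obtained from $\widetilde T_j$ by forgetting the order within rows. Then for every $1\le j\le (k+l)l$, the tabloids $T_{j-1}$ and $T_j$ are either equal or connected by a Knuth move.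
   Context: $\overline i=i+n\mathbb Z$, $[\overline n]=\{\overline1,\dots,\overline n\}$. A tabloid of shape $\lambda$ is a sequence $(T_1,\dots,T_{\ell(\lambda)})$ of pairwise disjoint subsets of $[\overline n]$ with $|T_r|=\lambda_r$ and union $[\overline n]$ (row 1 highest); forgetting order within rows of a filling means taking $T_r$ = set of entries in row $r$. $\tau(T)=\{\overline i:\overline i\text{ lies in a strictly higher row of } T\text{ than }\overline{i+1}\}$. $T,T'$ are connected by a Knuth move if $T'$ is obtained from $T$ by exchanging $\overline i$ and $\overline{i+1}$ for some $i$ and neither of $\tau(T),\tau(T')$ contains the other. Rows of the Young diagram are numbered from the top, columns from the left. *)

theory Defs
  imports Complex_Main
begin

definition is_partition :: "nat \<Rightarrow> nat list \<Rightarrow> bool" where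
  "is_partition n lam \<longleftrightarrow> sorted_wrt (\<ge>) lam \<and> 0 \<notin> set lam \<and> sum_list lam = n"

text \<open>Young diagram (English convention): cell (r, c) = (row, column), rows numbered
  from the top starting at 1, columns from the left starting at 1.\<close>
definition young_diagram :: "nat list \<Rightarrow> (nat \<times> nat) set" where
  "young_diagram lam = {(r, c). 1 \<le> r \<and> r \<le> length lam \<and> 1 \<le> c \<and> c \<le> lam ! (r - 1)}"

text \<open>Residues modulo n are represented by their representatives in {0..<n}.
  A filling is a map from cells to residues, bijective from the diagram.\<close>

definition swap_cells :: "(nat \<times> nat \<Rightarrow> int) \<Rightarrow> nat \<times> nat \<Rightarrow> nat \<times> nat \<Rightarrow> (nat \<times> nat \<Rightarrow> int)" where
  "swap_cells F p q = F(p := F q, q := F p)"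

definition tabloid_of :: "nat list \<Rightarrow> (nat \<times> nat \<Rightarrow> int) \<Rightarrow> nat \<Rightarrow> int set" where
  "tabloid_of lam F r = {F (r, c) | c. (r, c) \<in> young_diagram lam}"

definition tau :: "nat \<Rightarrow> (nat \<Rightarrow> int set) \<Rightarrow> int set" where
  "tau n Tb = {x \<in> {0..<int n}. \<exists>r r'. x \<in> Tb r \<and> (x + 1) mod int n \<in> Tb r' \<and> r < r'}"

definition swap_res :: "nat \<Rightarrow> int \<Rightarrow> int \<Rightarrow> int" where
  "swap_res n x y = (if y = x then (x + 1) mod int n else if y = (x + 1) mod int n then x else y)"

definition knuth_move :: "nat \<Rightarrow> (nat \<Rightarrow> int set) \<Rightarrow> (nat \<Rightarrow> int set) \<Rightarrow> bool" where
  "knuth_move n Tb Tb' \<longleftrightarrow>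
     (\<exists>x \<in> {0..<int n}. Tb' = (\<lambda>r. swap_res n x ` Tb r)
        \<and> \<not> tau n Tb \<subseteq> tau n Tb' \<and> \<not> tau n Tb' \<subseteq> tau n Tb)"

fun fill_seq :: "(nat \<times> nat \<Rightarrow> int) \<Rightarrow> nat \<Rightarrow> nat \<Rightarrow> nat \<Rightarrow> nat \<Rightarrow> nat \<Rightarrow> (nat \<times> nat \<Rightarrow> int)" where
  "fill_seq F k l c1 c2 0 = F"
| "fill_seq F k l c1 c2 (Suc j) =
     (let m = nat \<lceil>real (Suc j) / real (k + l)\<rceil>
      in swap_cells (fill_seq F k l c1 c2 j) ((k + l) * m + 1 - Suc j, c1) (m, c2))"

end

theory Submission
  imports Defs
begin

lemma swap_bij:
  assumes "bij_betw F D B" "p \<in> D" "q \<in> D"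
  shows "bij_betw (swap_cells F p q) D B"
proof -
  have "swap_cells F p q = F \<circ> (\<lambda>x. if x = p then q else if x = q then p else x)"
    by (auto simp: swap_cells_def)
  moreover have "bij_betw (\<lambda>x. if x = p then q else if x = q then p else x) D D"
  proof -
    let ?g = "\<lambda>x. if x = p then q else if x = q then p else x"
    have "?g \<circ> ?g = id" by auto
    moreover have "?g ` D \<subseteq> D" using assms(2,3) by auto
    ultimately show ?thesis
      by (intro bij_betw_byWitness[where f'="?g"]) (auto simp: fun_eq_iff)
  qed
  ultimately show ?thesis using assms(1) by (simp add: bij_betw_trans)
qed

lemma tabloid_same_row:
  assumes "(a, c) \<in> young_diagram lam" "(a, c') \<in> young_diagram lam"
  shows "tabloid_of lam (swap_cells F (a, c) (a, c')) = tabloid_of lam F"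
  using assms unfolding tabloid_of_def swap_cells_def
  by (rule_tac ext) (auto, metis+)

lemma tabloid_swap:
  assumes inj: "inj_on F (young_diagram lam)" and p: "p \<in> young_diagram lam" and p': "p' \<in> young_diagram lam"
    and ne: "p \<noteq> p'" and Fp: "F p = x" and Fp': "F p' = (x + 1) mod int n"
  shows "tabloid_of lam (swap_cells F p p') = (\<lambda>r. swap_res n x ` tabloid_of lam F r)"
proof
  fix r
  have xne: "x \<noteq> (x + 1) mod int n" using inj p p' ne Fp Fp' by (metis inj_on_def)
  have sw: "swap_cells F p p' c = swap_res n x (F c)" if "c \<in> young_diagram lam" for c
  proof -
    have "c \<noteq> p \<Longrightarrow> F c \<noteq> x" using inj p that Fp by (metis inj_on_def)
    moreover have "c \<noteq> p' \<Longrightarrow> F c \<noteq> (x+1) mod int n" using inj p' that Fp' by (metis inj_on_def)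
    ultimately show ?thesis using xne Fp Fp' ne by (auto simp: swap_cells_def swap_res_def)
  qed
  show "tabloid_of lam (swap_cells F p p') r = swap_res n x ` tabloid_of lam F r"
    unfolding tabloid_of_def using sw by (auto simp: image_def) (metis)+
qed

lemma tau_iff:
  assumes inj: "inj_on F (young_diagram lam)" and p: "p \<in> young_diagram lam" and p': "p' \<in> young_diagram lam"
    and Fp: "F p = v" and Fp': "F p' = (v + 1) mod int n" and v: "v \<in> {0..<int n}"
  shows "v \<in> tau n (tabloid_of lam F) \<longleftrightarrow> fst p < fst p'"
proof
  assume "v \<in> tau n (tabloid_of lam F)"
  then obtain r r' c c' where "(r,c) \<in> young_diagram lam" "(r',c') \<in> young_diagram lam"
     "F (r,c) = v" "F (r',c') = (v+1) mod int n" "r < r'"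
    unfolding tau_def tabloid_of_def by auto
  moreover have "(r,c) = p" using inj p Fp \<open>(r,c) \<in> young_diagram lam\<close> \<open>F (r,c) = v\<close> by (metis inj_on_def)
  moreover have "(r',c') = p'" using inj p' Fp' calculation by (metis inj_on_def)
  ultimately show "fst p < fst p'" by auto
next
  assume "fst p < fst p'"
  then show "v \<in> tau n (tabloid_of lam F)" using v p p' Fp Fp'
    unfolding tau_def tabloid_of_def
    by (cases p, cases p') (simp, metis)
qed

definition Gf :: "(nat \<times> nat \<Rightarrow> int) \<Rightarrow> nat \<Rightarrow> int \<Rightarrow> nat \<Rightarrow> nat \<Rightarrow> nat \<Rightarrow> nat \<Rightarrow> nat \<Rightarrow> nat \<Rightarrow> (nat \<times> nat \<Rightarrow> int)" where
  "Gf T n i k l c1 c2 q s = (\<lambda>(r,c). if c = c1 \<and> 1 \<le> r \<and> r \<le> k+l then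
      (if r + s \<le> k+l then (i + int q + int r) mod int n else (i + int q + 1 + int r) mod int n)
    else if c = c2 \<and> 1 \<le> r \<and> r \<le> l then
      (if r \<le> q then (i + int r) mod int n else if r = q+1 then (i + int q + 1 + int (k+l) - int s) mod int n
       else (i + int (k+l) + int r) mod int n)
    else T (r,c))"

lemma Gf_step:
  assumes "c1 \<noteq> c2" "s < k+l" "q < l"
  shows "swap_cells (Gf T n i k l c1 c2 q s) (k+l-s, c1) (q+1, c2) = Gf T n i k l c1 c2 q (Suc s)"
  using assms unfolding swap_cells_def Gf_def
  apply (auto simp: fun_eq_iff of_nat_diff algebra_simps)
  apply (subgoal_tac "int k + int l = int q + int s + 1")
   apply (simp add: algebra_simps)
   apply (rule arg_cong[where f="\<lambda>x. x mod int n"])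
   apply linarith
  apply linarith
  done

lemma Gf_wrap:
  shows "Gf T n i k l c1 c2 q (k+l) = Gf T n i k l c1 c2 (Suc q) 0"
  unfolding Gf_def
  by (auto simp: fun_eq_iff algebra_simps)

lemma Gf_0:
  assumes "c1 \<noteq> c2"
    and "\<forall>r. 1 \<le> r \<and> r \<le> k + l \<longrightarrow> T (r, c1) = (i + int r) mod int n"
    and "\<forall>r. 1 \<le> r \<and> r \<le> l \<longrightarrow> T (r, c2) = (i + int (k + l) + int r) mod int n"
  shows "Gf T n i k l c1 c2 0 0 = T"
  using assms unfolding Gf_def
  by (auto simp: fun_eq_iff algebra_simps)

lemma fill_step:
  assumes "j < (k+l)*l"
  shows "fill_seq T k l c1 c2 (Suc j) = swap_cells (fill_seq T k l c1 c2 j) (k+l - j mod (k+l), c1) (j div (k+l) + 1, c2)"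
proof -
  let ?K = "k+l"
  have K: "?K > 0" using assms by (cases "k+l") auto
  have "nat \<lceil>real (Suc j) / real ?K\<rceil> = j div ?K + 1"
  proof -
    have "\<lceil>real (Suc j) / real ?K\<rceil> = int (j div ?K + 1)"
    proof (rule ceiling_unique)
      have "j = ?K * (j div ?K) + j mod ?K" by simp
      moreover have "j mod ?K < ?K" using K by simp
      moreover have "?K*(j div ?K + 1) = ?K*(j div ?K) + ?K" by simp
      ultimately have a: "?K * (j div ?K) < Suc j" "Suc j \<le> ?K * (j div ?K + 1)" by linarith+
      have Kr: "real ?K > 0" using K by (simp only: of_nat_0_less_iff)
      from a(1) have "real (j div ?K) * real ?K < real (Suc j)" by (metis of_nat_less_iff of_nat_mult mult.commute)
      hence "real (j div ?K) < real (Suc j) / real ?K" by (simp only: pos_less_divide_eq[OF Kr])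
      then show "real_of_int (int (j div ?K + 1)) - 1 < real (Suc j) / real ?K"
        by simp
      from a(2) have "real (Suc j) \<le> real (j div ?K + 1) * real ?K" by (metis of_nat_le_iff of_nat_mult mult.commute)
      hence "real (Suc j) / real ?K \<le> real (j div ?K + 1)" by (simp only: pos_divide_le_eq[OF Kr])
      then show "real (Suc j) / real ?K \<le> real_of_int (int (j div ?K + 1))"
        by simp
    qed
    then show ?thesis by simp
  qed
  moreover have "?K * (j div ?K + 1) + 1 - Suc j = ?K - j mod ?K"
  proof -
    have "j = ?K * (j div ?K) + j mod ?K" by simp
    then show ?thesis by (simp add: algebra_simps)
  qed
  ultimately show ?thesis by (simp add: Let_def)
qed


lemma fill_formula:
  assumes "c1 \<noteq> c2"
    and "\<forall>r. 1 \<le> r \<and> r \<le> k + l \<longrightarrow> T (r, c1) = (i + int r) mod int n"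
    and "\<forall>r. 1 \<le> r \<and> r \<le> l \<longrightarrow> T (r, c2) = (i + int (k + l) + int r) mod int n"
  shows "j \<le> (k+l)*l \<Longrightarrow> fill_seq T k l c1 c2 j = Gf T n i k l c1 c2 (j div (k+l)) (j mod (k+l))"
proof (induction j)
  case 0
  then show ?case using Gf_0[OF assms] by simp
next
  case (Suc j)
  let ?K = "k+l"
  have jl: "j < ?K*l" using Suc.prems by simp
  have K: "?K > 0" using jl by (cases "k+l") auto
  have ql: "j div ?K < l" using jl K by (simp add: div_less_iff_less_mult mult.commute)
  have sK: "j mod ?K < ?K" using K by simp
  have "fill_seq T k l c1 c2 (Suc j) = Gf T n i k l c1 c2 (j div ?K) (Suc (j mod ?K))"
    using fill_step[OF jl] Suc.IH jl Gf_step[OF assms(1) sK ql] by (simp del: fill_seq.simps)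
  also have "\<dots> = Gf T n i k l c1 c2 (Suc j div ?K) (Suc j mod ?K)"
  proof (cases "Suc (j mod ?K) < ?K")
    case True
    then have "Suc j div ?K = j div ?K" "Suc j mod ?K = Suc (j mod ?K)"
      by (simp_all add: div_Suc mod_Suc)
    then show ?thesis by simp
  next
    case False
    then have e: "Suc (j mod ?K) = ?K" using sK by simp
    then have "Suc j div ?K = Suc (j div ?K)" "Suc j mod ?K = 0"
      by (simp_all add: div_Suc mod_Suc)
    then show ?thesis using e Gf_wrap by metis
  qed
  finally show ?case .
qed

lemma fill_bij:
  assumes "bij_betw T (young_diagram lam) {0..<int n}"
    and "\<forall>r. (r, c1) \<in> young_diagram lam \<longleftrightarrow> 1 \<le> r \<and> r \<le> k + l"
    and "\<forall>r. (r, c2) \<in> young_diagram lam \<longleftrightarrow> 1 \<le> r \<and> r \<le> l"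
  shows "j \<le> (k+l)*l \<Longrightarrow> bij_betw (fill_seq T k l c1 c2 j) (young_diagram lam) {0..<int n}"
proof (induction j)
  case 0
  then show ?case using assms(1) by simp
next
  case (Suc j)
  let ?K = "k+l"
  have jl: "j < ?K*l" using Suc.prems by simp
  have K: "?K > 0" using jl by (cases "k+l") auto
  have ql: "j div ?K < l" using jl K by (simp add: div_less_iff_less_mult mult.commute)
  have sK: "j mod ?K < ?K" using K by simp
  show ?case unfolding fill_step[OF jl]
  proof (rule swap_bij)
    show "bij_betw (fill_seq T k l c1 c2 j) (young_diagram lam) {0..<int n}" using Suc.IH jl by simp
    have "1 \<le> ?K - j mod ?K" "?K - j mod ?K \<le> ?K" using sK by auto
    then show "(?K - j mod ?K, c1) \<in> young_diagram lam" using assms(2) by blast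
    show "(j div ?K + 1, c2) \<in> young_diagram lam" using assms(3) ql by simp
  qed
qed

theorem proposition7p16:
  fixes n :: nat and lam :: "nat list" and T :: "nat \<times> nat \<Rightarrow> int"
    and c1 c2 k l :: nat and i :: int
  assumes "is_partition n lam"
    and "bij_betw T (young_diagram lam) {0..<int n}"
    and "c1 \<noteq> c2"
    and "\<forall>r. (r, c1) \<in> young_diagram lam \<longleftrightarrow> 1 \<le> r \<and> r \<le> k + l"
    and "\<forall>r. 1 \<le> r \<and> r \<le> k + l \<longrightarrow> T (r, c1) = (i + int r) mod int n"
    and "\<forall>r. (r, c2) \<in> young_diagram lam \<longleftrightarrow> 1 \<le> r \<and> r \<le> l"
    and "\<forall>r. 1 \<le> r \<and> r \<le> l \<longrightarrow> T (r, c2) = (i + int (k + l) + int r) mod int n"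
  shows "\<forall>j \<in> {1..(k + l) * l}.
           tabloid_of lam (fill_seq T k l c1 c2 (j - 1)) = tabloid_of lam (fill_seq T k l c1 c2 j)
         \<or> knuth_move n (tabloid_of lam (fill_seq T k l c1 c2 (j - 1))) (tabloid_of lam (fill_seq T k l c1 c2 j))"
proof
  fix j assume j: "j \<in> {1..(k + l) * l}"
  let ?K = "k+l"
  let ?D = "young_diagram lam"
  define j' where "j' = j - 1"
  have jl: "j' < ?K*l" and jj: "j = Suc j'" using j unfolding j'_def by auto
  have K: "?K > 0" using jl by (cases "k+l") auto
  define q where "q = j' div ?K"
  define s where "s = j' mod ?K"
  have ql: "q < l" using jl K unfolding q_def by (simp add: div_less_iff_less_mult mult.commute)
  have sK: "s < ?K" using K unfolding s_def by simp
  define F where "F = fill_seq T k l c1 c2 j'"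
  define a where "a = ?K - s"
  define b where "b = q + 1"
  have F': "fill_seq T k l c1 c2 j = swap_cells F (a, c1) (b, c2)"
    unfolding jj F_def a_def b_def q_def s_def by (rule fill_step[OF jl])
  have FG: "F = Gf T n i k l c1 c2 q s"
    unfolding F_def q_def s_def using fill_formula[OF assms(3,5,7)] jl by simp
  have Fbij: "bij_betw F ?D {0..<int n}" unfolding F_def using fill_bij[OF assms(2,4,6)] jl by simp
  have Fbij': "bij_betw (swap_cells F (a, c1) (b, c2)) ?D {0..<int n}"
    unfolding F'[symmetric] using fill_bij[OF assms(2,4,6)] jl jj by (simp del: fill_seq.simps)
  have inj: "inj_on F ?D" and inj': "inj_on (swap_cells F (a, c1) (b, c2)) ?D"
    using Fbij Fbij' by (auto simp: bij_betw_def)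
  have a1: "1 \<le> a" "a \<le> ?K" using sK unfolding a_def by auto
  have b1: "1 \<le> b" "b \<le> l" using ql unfolding b_def by auto
  have pa: "(a, c1) \<in> ?D" and pb: "(b, c2) \<in> ?D" using a1 b1 assms(4,6) by auto
  define x where "x = (i + int q + int a) mod int n"
  have Fa: "F (a, c1) = x" unfolding FG x_def Gf_def a_def using sK by auto
  have Fb: "F (b, c2) = (x + 1) mod int n"
    unfolding FG x_def Gf_def b_def a_def using sK ql assms(3)
    by (auto simp: mod_simps of_nat_diff algebra_simps)
  have ne: "(a, c1) \<noteq> (b, c2)" using assms(3) by auto
  have xr: "x \<in> {0..<int n}" using Fa pa Fbij by (auto simp: bij_betw_def)
  show "tabloid_of lam (fill_seq T k l c1 c2 (j - 1)) = tabloid_of lam (fill_seq T k l c1 c2 j)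
         \<or> knuth_move n (tabloid_of lam (fill_seq T k l c1 c2 (j - 1))) (tabloid_of lam (fill_seq T k l c1 c2 j))"
  proof (cases "a = b")
    case True
    then show ?thesis unfolding F' j'_def[symmetric] F_def[symmetric]
      using tabloid_same_row[of a c1 lam c2 F] pa pb by simp
  next
    case False
    let ?F' = "swap_cells F (a, c1) (b, c2)"
    have TS: "tabloid_of lam ?F' = (\<lambda>r. swap_res n x ` tabloid_of lam F r)"
      by (rule tabloid_swap[OF inj pa pb ne Fa Fb])
    have F'a: "?F' (a, c1) = (x + 1) mod int n" using Fb by (simp add: swap_cells_def)
    have F'b: "?F' (b, c2) = x" using Fa ne by (simp add: swap_cells_def)
    have xF: "x \<in> tau n (tabloid_of lam F) \<longleftrightarrow> a < b"
      using tau_iff[OF inj pa pb Fa Fb xr] by simp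
    have xF': "x \<in> tau n (tabloid_of lam ?F') \<longleftrightarrow> b < a"
      using tau_iff[OF inj' pb pa F'b F'a xr] by simp
    have "\<not> tau n (tabloid_of lam F) \<subseteq> tau n (tabloid_of lam ?F') \<and>
          \<not> tau n (tabloid_of lam ?F') \<subseteq> tau n (tabloid_of lam F)"
    proof (cases "a < b")
      case True
      have a2: "a + 1 \<le> ?K" using True b1 by simp
      have pa2: "(a+1, c1) \<in> ?D" using a2 assms(4) by auto
      define v where "v = (x + 1) mod int n"
      have vr: "v \<in> {0..<int n}" unfolding v_def using xr True by auto
      have Fa2: "F (a+1, c1) = (v + 1) mod int n"
      proof -
        have "F (a+1, c1) = (i + int q + 1 + int (a+1)) mod int n"
          unfolding FG Gf_def using a2 a1 by (simp add: a_def)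
        moreover have "(v + 1) mod int n = (i + int q + int a + 1 + 1) mod int n"
          unfolding v_def x_def by (simp add: mod_add_left_eq)
        ultimately show ?thesis by (simp add: algebra_simps)
      qed
      have F'a2: "?F' (a+1, c1) = (v + 1) mod int n"
        using Fa2 assms(3) by (simp add: swap_cells_def)
      have "v \<notin> tau n (tabloid_of lam F)"
        using tau_iff[OF inj pb pa2 Fb[folded v_def] Fa2 vr] True by simp
      moreover have "v \<in> tau n (tabloid_of lam ?F')"
        using tau_iff[OF inj' pa pa2 F'a[folded v_def] F'a2 vr] by simp
      ultimately show ?thesis using xF xF' True by auto
    next
      case False
      then have ba: "b < a" using \<open>a \<noteq> b\<close> by simp
      have "1 \<le> a - 1" "a - 1 \<le> k + l" using ba b1 a1 by linarith+
      then have pa2: "(a-1, c1) \<in> ?D" using assms(4) by blast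
      define v where "v = (i + int q + int (a - 1)) mod int n"
      have Fa2: "F (a-1, c1) = v"
      proof -
        have as: "a + s = k + l" using sK unfolding a_def by simp
        have "a - 1 + s \<le> k + l" "1 \<le> a - 1" "a - 1 \<le> k + l" using ba b1 a1 as by linarith+
        then show ?thesis unfolding FG v_def Gf_def by simp
      qed
      have F'a2: "?F' (a-1, c1) = v"
      proof -
        have "a - 1 \<noteq> a" using \<open>1 \<le> a - 1\<close> by linarith
        then show ?thesis using Fa2 assms(3) by (simp add: swap_cells_def)
      qed
      have vr: "v \<in> {0..<int n}" using Fa2 pa2 Fbij by (auto simp: bij_betw_def)
      have vx: "(v + 1) mod int n = x"
      proof -
        have "int (a - 1) + 1 = int a" using ba b1 by simp
        have "(v + 1) mod int n = (i + int q + int (a - 1) + 1) mod int n"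
          unfolding v_def by (simp add: mod_add_left_eq)
        also have "\<dots> = x" unfolding x_def using \<open>int (a - 1) + 1 = int a\<close> by (simp add: add.assoc)
        finally show ?thesis .
      qed
      have "v \<in> tau n (tabloid_of lam F)"
        using tau_iff[OF inj pa2 pa Fa2 _ vr] vx Fa ba b1 by simp
      moreover have "v \<notin> tau n (tabloid_of lam ?F')"
        using tau_iff[OF inj' pa2 pb F'a2 _ vr] vx F'b ba by simp
      ultimately show ?thesis using xF xF' ba by auto
    qed
    then have "knuth_move n (tabloid_of lam F) (tabloid_of lam ?F')"
      unfolding knuth_move_def using xr TS by blast
    then show ?thesis unfolding F' j'_def[symmetric] F_def[symmetric] by simp
  qed
qed

end
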